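(* Let $A$ be a finite set and let $X \subset A^{\mathbb Z}$ be a strongly irreducible subshift. Then $X$ is surjunctive and its automorphism group $\mathrm{Aut}(X)$ is residually finite. Moreover, $X$ admits a shift-invariant Borel probability measure with full support.
   Context: $A^{\mathbb Z}$ carries the product topology of discrete topologies and the shift action $(gx)(h)=x(h-g)$. A subshift is a closed shift-invariant subset. $X$ is strongly irreducible if there is a finite $\Delta\subset\mathbb Z$ such that for all finite $\Omega_1,\Omega_2\subset\mathbb Z$ with $(\Omega_1-\Delta)\cap\Omega_2=\varnothing$ and all $x_1,x_2\in X$ there is $x\in X$ with $x|_{\Omega_1}=x_1|_{\Omega_1}$ and $x|_{\Omega_2}=x_2|_{\Omega_2}$. A cellular automaton on $X$ is a continuous shift-equivariant map $X\to X$; $X$ is surjunctive if every injective cellular automaton $X\to X$ is surjective; $\mathrm{Aut}(X)$ is the group of bijective cellular automata $X\to X$ under composition. A group is residually finite if the intersection of its finite-index subgroups is trivial. *)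

theory Defs
  imports "HOL-Probability.Probability" "HOL-Algebra.Coset"
begin

definition fullshift_top :: "'a set \<Rightarrow> (int \<Rightarrow> 'a) topology" where
  "fullshift_top A = product_topology (\<lambda>_::int. discrete_topology A) UNIV"

definition zshift :: "int \<Rightarrow> (int \<Rightarrow> 'a) \<Rightarrow> (int \<Rightarrow> 'a)" where
  "zshift g x = (\<lambda>h. x (h - g))"

definition subshift :: "'a set \<Rightarrow> (int \<Rightarrow> 'a) set \<Rightarrow> bool" where
  "subshift A X \<longleftrightarrow> closedin (fullshift_top A) X \<and> (\<forall>g. \<forall>x\<in>X. zshift g x \<in> X)"

definition strongly_irreducible :: "(int \<Rightarrow> 'a) set \<Rightarrow> bool" where
  "strongly_irreducible X \<longleftrightarrow>
     (\<exists>\<Delta>::int set. finite \<Delta> \<and>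
       (\<forall>\<Omega>1 \<Omega>2::int set. finite \<Omega>1 \<longrightarrow> finite \<Omega>2 \<longrightarrow>
          {a - d |a d. a \<in> \<Omega>1 \<and> d \<in> \<Delta>} \<inter> \<Omega>2 = {} \<longrightarrow>
          (\<forall>x1\<in>X. \<forall>x2\<in>X. \<exists>x\<in>X. (\<forall>h\<in>\<Omega>1. x h = x1 h) \<and> (\<forall>h\<in>\<Omega>2. x h = x2 h))))"

definition cellular_automaton :: "'a set \<Rightarrow> (int \<Rightarrow> 'a) set \<Rightarrow> ((int \<Rightarrow> 'a) \<Rightarrow> (int \<Rightarrow> 'a)) \<Rightarrow> bool" where
  "cellular_automaton A X \<tau> \<longleftrightarrow>
     \<tau> \<in> extensional X \<and>
     continuous_map (subtopology (fullshift_top A) X) (subtopology (fullshift_top A) X) \<tau> \<and>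
     (\<forall>g. \<forall>x\<in>X. \<tau> (zshift g x) = zshift g (\<tau> x))"

definition surjunctive :: "'a set \<Rightarrow> (int \<Rightarrow> 'a) set \<Rightarrow> bool" where
  "surjunctive A X \<longleftrightarrow>
     (\<forall>\<tau>. cellular_automaton A X \<tau> \<longrightarrow> inj_on \<tau> X \<longrightarrow> \<tau> ` X = X)"

definition Aut :: "'a set \<Rightarrow> (int \<Rightarrow> 'a) set \<Rightarrow> ((int \<Rightarrow> 'a) \<Rightarrow> (int \<Rightarrow> 'a)) monoid" where
  "Aut A X = \<lparr> carrier = {\<tau>. cellular_automaton A X \<tau> \<and> bij_betw \<tau> X X},
              mult = (\<lambda>\<sigma> \<tau>. \<lambda>x\<in>X. \<sigma> (\<tau> x)),
              one = (\<lambda>x\<in>X. x) \<rparr>"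

definition residually_finite :: "('g, 'b) monoid_scheme \<Rightarrow> bool" where
  "residually_finite G \<longleftrightarrow>
     (\<forall>g\<in>carrier G. g \<noteq> \<one>\<^bsub>G\<^esub> \<longrightarrow>
        (\<exists>H. subgroup H G \<and> finite (rcosets\<^bsub>G\<^esub> H) \<and> g \<notin> H))"

definition borel_sets_of :: "'a set \<Rightarrow> (int \<Rightarrow> 'a) set \<Rightarrow> (int \<Rightarrow> 'a) set set" where
  "borel_sets_of A X = sigma_sets X {U. openin (subtopology (fullshift_top A) X) U}"

end

theory Submission
  imports Defs
begin



lemma topspace_F: "topspace (fullshift_top A) = {x. \<forall>i. x i \<in> A}"
  by (auto simp: fullshift_top_def PiE_def extensional_def)

lemma open_nbhd:
  assumes "openin (fullshift_top A) V" "x \<in> V"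
  shows "\<exists>n::nat. \<forall>z\<in>topspace (fullshift_top A). (\<forall>i. \<bar>i\<bar> \<le> int n \<longrightarrow> z i = x i) \<longrightarrow> z \<in> V"
proof -
  obtain U where U: "finite {i \<in> (UNIV::int set). U i \<noteq> A}" "\<forall>i. openin (discrete_topology A) (U i)"
     "x \<in> Pi\<^sub>E UNIV U" "Pi\<^sub>E UNIV U \<subseteq> V"
    using assms unfolding fullshift_top_def openin_product_topology_alt by force
  define J where "J = {i \<in> (UNIV::int set). U i \<noteq> A}"
  define n where "n = Max (insert 0 ((\<lambda>i. nat \<bar>i\<bar>) ` J))"
  have fin: "finite J" using U(1) J_def by simp
  have nJ: "\<bar>i\<bar> \<le> int n" if "i \<in> J" for i
  proof -
    have "nat \<bar>i\<bar> \<le> n" unfolding n_def using fin that by (intro Max_ge) auto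
    then show ?thesis by simp
  qed
  show ?thesis
  proof (intro exI ballI impI)
    fix z assume z: "z \<in> topspace (fullshift_top A)" and ag: "\<forall>i. \<bar>i\<bar> \<le> int n \<longrightarrow> z i = x i"
    have "\<forall>i. z i \<in> U i"
    proof
      fix i show "z i \<in> U i"
      proof (cases "i \<in> J")
        case True then show ?thesis using ag nJ U(3) by (auto simp: PiE_def)
      next
        case False then show ?thesis using z by (auto simp: J_def topspace_F)
      qed
    qed
    then have "z \<in> Pi\<^sub>E UNIV U" by (auto simp: PiE_iff)
    then show "z \<in> V" using U(4) by blast
  qed
qed

lemma closed_approx:
  assumes "closedin (fullshift_top A) C" "y \<in> topspace (fullshift_top A)"
    and "\<And>n::nat. \<exists>c\<in>C. \<forall>i. \<bar>i\<bar> \<le> int n \<longrightarrow> c i = y i"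
  shows "y \<in> C"
proof (rule ccontr)
  assume "y \<notin> C"
  then have "y \<in> topspace (fullshift_top A) - C" using assms(2) by blast
  moreover have "openin (fullshift_top A) (topspace (fullshift_top A) - C)" using assms(1) by blast
  ultimately obtain n where n: "\<forall>z\<in>topspace (fullshift_top A). (\<forall>i. \<bar>i\<bar> \<le> int n \<longrightarrow> z i = y i) \<longrightarrow> z \<in> topspace (fullshift_top A) - C"
    using open_nbhd by blast
  obtain c where "c \<in> C" "\<forall>i. \<bar>i\<bar> \<le> int n \<longrightarrow> c i = y i" using assms(3) by blast
  moreover have "c \<in> topspace (fullshift_top A)" using assms(1) \<open>c \<in> C\<close> closedin_subset by blast
  ultimately show False using n by blast
qed




definition occ :: "(int \<Rightarrow> 'a) \<Rightarrow> int \<Rightarrow> 'a list \<Rightarrow> bool" where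
  "occ x a w \<longleftrightarrow> (\<forall>i<length w. x (a + int i) = w ! i)"

definition inL :: "(int \<Rightarrow> 'a) set \<Rightarrow> 'a list \<Rightarrow> bool" where
  "inL X w \<longleftrightarrow> (\<exists>x\<in>X. occ x 0 w)"

lemma occ_shift: "occ x a w \<Longrightarrow> occ (zshift g x) (a + g) w"
  by (auto simp: occ_def zshift_def algebra_simps)

lemma occ_append: "occ x a (u @ v) \<longleftrightarrow> occ x a u \<and> occ x (a + int (length u)) v"
proof
  assume h: "occ x a (u @ v)"
  show "occ x a u \<and> occ x (a + int (length u)) v"
  proof
    show "occ x a u" unfolding occ_def
    proof (intro allI impI)
      fix i assume "i < length u"
      then show "x (a + int i) = u ! i" using h[unfolded occ_def, rule_format, of i] by (simp add: nth_append)
    qed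
    show "occ x (a + int (length u)) v" unfolding occ_def
    proof (intro allI impI)
      fix i assume "i < length v"
      then show "x (a + int (length u) + int i) = v ! i"
        using h[unfolded occ_def, rule_format, of "length u + i"] by (simp add: nth_append add.assoc)
    qed
  qed
next
  assume h: "occ x a u \<and> occ x (a + int (length u)) v"
  show "occ x a (u @ v)" unfolding occ_def
  proof (intro allI impI)
    fix i assume i: "i < length (u @ v)"
    show "x (a + int i) = (u @ v) ! i"
    proof (cases "i < length u")
      case True then show ?thesis using h by (simp add: occ_def nth_append)
    next
      case False
      then obtain j where j: "i = length u + j" by (metis le_add_diff_inverse not_less)
      then have "j < length v" using i by simp
      then show ?thesis using h j by (simp add: occ_def nth_append add.assoc)
    qed
  qed
qed

locale lang =
  fixes X :: "(int \<Rightarrow> 'a) set" and A :: "'a set" and N :: nat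
  assumes inv: "\<And>g x. x \<in> X \<Longrightarrow> zshift g x \<in> X"
    and vals: "\<And>x i. x \<in> X \<Longrightarrow> x i \<in> A"
    and finA: "finite A"
    and ne: "X \<noteq> {}"
    and spec: "\<And>u v. inL X u \<Longrightarrow> inL X v \<Longrightarrow> \<exists>g. length g = N \<and> inL X (u @ g @ v)"
begin

lemma inL_at: "x \<in> X \<Longrightarrow> occ x a w \<Longrightarrow> inL X w"
  unfolding inL_def using occ_shift[of x a w "-a"] inv by force

lemma inL_infix: "inL X (u @ w @ v) \<Longrightarrow> inL X w"
  unfolding inL_def using occ_append inL_at by (metis inL_def)

lemma inL_prefix: "inL X (u @ v) \<Longrightarrow> inL X u"
  using inL_infix[of "[]" u v] by simp

lemma inL_suffix: "inL X (u @ v) \<Longrightarrow> inL X v"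
  using inL_infix[of u v "[]"] by simp

lemma inL_Nil: "inL X []"
  using ne by (auto simp: inL_def occ_def)

lemma inL_set: "inL X w \<Longrightarrow> set w \<subseteq> A"
  by (auto simp: inL_def occ_def in_set_conv_nth) (metis vals)

definition R :: "'a list \<Rightarrow> 'a list \<Rightarrow> 'a list set" where
  "R a b = {g. length g = N \<and> inL X (a @ g @ b)}"

lemma finR: "finite (R a b)"
proof -
  have "R a b \<subseteq> {g. set g \<subseteq> A \<and> length g = N}"
    unfolding R_def using inL_set by fastforce
  then show ?thesis using finite_lists_length_eq[OF finA] finite_subset by blast
qed

lemma sync_exists: "\<exists>m. inL X m \<and> (\<forall>x y. inL X (x @ m) \<longrightarrow> inL X (m @ y) \<longrightarrow> inL X (x @ m @ y))"
proof -
  define P where "P = (\<lambda>n. \<exists>a b. inL X a \<and> inL X b \<and> card (R a b) = n)"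
  have "P (card (R [] []))" unfolding P_def using inL_Nil by blast
  then have "P (LEAST n. P n)" by (rule LeastI)
  then obtain a b where ab: "inL X a" "inL X b" "card (R a b) = (LEAST n. P n)" unfolding P_def by blast
  have key: "R (c @ a) (b @ d) = R a b" if "inL X (c @ a)" "inL X (b @ d)" for c d
  proof (rule card_seteq[OF finR])
    show "R (c @ a) (b @ d) \<subseteq> R a b"
      unfolding R_def using inL_infix[of c "a @ _ @ b" d] by auto
    have "P (card (R (c @ a) (b @ d)))" unfolding P_def using that by blast
    then show "card (R a b) \<le> card (R (c @ a) (b @ d))" using ab(3) Least_le by metis
  qed
  obtain g0 where g0: "length g0 = N" "inL X (a @ g0 @ b)" using spec[OF ab(1,2)] by blast
  define m where "m = a @ g0 @ b"
  show ?thesis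
  proof (intro exI conjI allI impI)
    show "inL X m" using g0 m_def by simp
    fix x y assume h: "inL X (x @ m)" "inL X (m @ y)"
    have xa: "inL X (x @ a)" using h(1) inL_prefix[of "x @ a" "g0 @ b"] m_def by simp
    have by': "inL X (b @ y)" using h(2) inL_suffix[of "a @ g0" "b @ y"] m_def by simp
    have "g0 \<in> R a b" using g0 unfolding R_def by simp
    then have "g0 \<in> R (x @ a) (b @ y)" using key[OF xa by'] by simp
    then show "inL X (x @ m @ y)" unfolding R_def m_def by simp
  qed
qed

lemma periodic_word:
  assumes "inL X u"
  shows "\<exists>B p s. B = p @ u @ s \<and> (\<forall>k. inL X (concat (replicate k B)))"
proof -
  obtain m where m: "inL X m" "\<And>x y. inL X (x @ m) \<Longrightarrow> inL X (m @ y) \<Longrightarrow> inL X (x @ m @ y)"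
    using sync_exists by blast
  obtain h1 where h1: "inL X (m @ h1 @ u)" using spec[OF m(1) assms] by blast
  obtain h2 where h2: "inL X ((m @ h1 @ u) @ h2 @ m)" using spec[OF h1 m(1)] by blast
  define B where "B = m @ h1 @ u @ h2"
  have Bm: "inL X (B @ m)" using h2 B_def by simp
  have all: "inL X (concat (replicate k B) @ m)" for k
  proof (induction k)
    case 0 then show ?case using m(1) by simp
  next
    case (Suc k)
    have "inL X (m @ (h1 @ u @ h2 @ m))" using Bm B_def by simp
    from m(2)[OF Suc this] show ?case
      by (simp add: replicate_append_same[symmetric] B_def)
  qed
  show ?thesis
  proof (intro exI conjI allI)
    show "B = (m @ h1) @ u @ h2" using B_def by simp
    fix k show "inL X (concat (replicate k B))" using all[of k] inL_prefix by blast
  qed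
qed

end



lemma nth_concat_replicate:
  "i < k * length B \<Longrightarrow> concat (replicate k B) ! i = B ! (i mod length B)"
proof (induction k arbitrary: i)
  case 0 then show ?case by simp
next
  case (Suc k)
  show ?case
  proof (cases "i < length B")
    case True then show ?thesis by (simp add: nth_append)
  next
    case False
    then have "i - length B < k * length B" using Suc.prems by simp
    moreover have "(i - length B) mod length B = i mod length B"
      using False by (simp add: le_mod_geq)
    ultimately show ?thesis using Suc.IH False by (simp add: nth_append)
  qed
qed

locale sis =
  fixes A :: "'a set" and X :: "(int \<Rightarrow> 'a) set"
  assumes finA: "finite A" and sub: "subshift A X" and ne: "X \<noteq> {}"
    and si: "strongly_irreducible X"
begin

lemma closedX: "closedin (fullshift_top A) X" using sub by (simp add: subshift_def)

lemma inv: "x \<in> X \<Longrightarrow> zshift g x \<in> X" using sub by (simp add: subshift_def)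

lemma vals: "x \<in> X \<Longrightarrow> x i \<in> A"
  using closedin_subset[OF closedX] topspace_F by blast

lemma X_top: "X \<subseteq> topspace (fullshift_top A)"
  using closedin_subset[OF closedX] .

definition Ksi :: int where
  "Ksi = (SOME K. K \<ge> 0 \<and> (\<forall>\<Omega>1 \<Omega>2::int set. finite \<Omega>1 \<longrightarrow> finite \<Omega>2 \<longrightarrow>
          (\<forall>a\<in>\<Omega>1. \<forall>b\<in>\<Omega>2. b - a \<ge> K \<or> a - b \<ge> K) \<longrightarrow>
          (\<forall>x1\<in>X. \<forall>x2\<in>X. \<exists>x\<in>X. (\<forall>h\<in>\<Omega>1. x h = x1 h) \<and> (\<forall>h\<in>\<Omega>2. x h = x2 h))))"

lemma Ksi_ex: "\<exists>K. K \<ge> 0 \<and> (\<forall>\<Omega>1 \<Omega>2::int set. finite \<Omega>1 \<longrightarrow> finite \<Omega>2 \<longrightarrow>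
          (\<forall>a\<in>\<Omega>1. \<forall>b\<in>\<Omega>2. b - a \<ge> K \<or> a - b \<ge> K) \<longrightarrow>
          (\<forall>x1\<in>X. \<forall>x2\<in>X. \<exists>x\<in>X. (\<forall>h\<in>\<Omega>1. x h = x1 h) \<and> (\<forall>h\<in>\<Omega>2. x h = x2 h)))"
proof -
  obtain \<Delta> :: "int set" where D: "finite \<Delta>" and P: "\<forall>\<Omega>1 \<Omega>2::int set. finite \<Omega>1 \<longrightarrow> finite \<Omega>2 \<longrightarrow>
          {a - d |a d. a \<in> \<Omega>1 \<and> d \<in> \<Delta>} \<inter> \<Omega>2 = {} \<longrightarrow>
          (\<forall>x1\<in>X. \<forall>x2\<in>X. \<exists>x\<in>X. (\<forall>h\<in>\<Omega>1. x h = x1 h) \<and> (\<forall>h\<in>\<Omega>2. x h = x2 h))"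
    using si unfolding strongly_irreducible_def by (elim exE conjE) (rule that; assumption)
  define K where "K = Max (insert 0 (abs ` \<Delta>)) + 1"
  have Kd: "\<bar>d\<bar> < K" if "d \<in> \<Delta>" for d
  proof -
    have "\<bar>d\<bar> \<le> Max (insert 0 (abs ` \<Delta>))" using D that by (intro Max_ge) auto
    then show ?thesis unfolding K_def by simp
  qed
  have K0: "K \<ge> 0"
  proof -
    have "0 \<le> Max (insert 0 (abs ` \<Delta>))" using D by (intro Max_ge) auto
    then show ?thesis unfolding K_def by simp
  qed
  show ?thesis
  proof (rule exI[of _ K], rule conjI[OF K0], intro allI impI)
    fix \<Omega>1 \<Omega>2 :: "int set"
    assume f: "finite \<Omega>1" "finite \<Omega>2" and sep: "\<forall>a\<in>\<Omega>1. \<forall>b\<in>\<Omega>2. b - a \<ge> K \<or> a - b \<ge> K"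
    have dis: "{a - d |a d. a \<in> \<Omega>1 \<and> d \<in> \<Delta>} \<inter> \<Omega>2 = {}"
    proof (rule ccontr)
      assume "{a - d |a d. a \<in> \<Omega>1 \<and> d \<in> \<Delta>} \<inter> \<Omega>2 \<noteq> {}"
      then obtain a d where "a \<in> \<Omega>1" "d \<in> \<Delta>" "a - d \<in> \<Omega>2" by blast
      then have "(a - d) - a \<ge> K \<or> a - (a - d) \<ge> K" using sep by blast
      then show False using Kd[OF \<open>d \<in> \<Delta>\<close>] by linarith
    qed
    then show "\<forall>x1\<in>X. \<forall>x2\<in>X. \<exists>x\<in>X. (\<forall>h\<in>\<Omega>1. x h = x1 h) \<and> (\<forall>h\<in>\<Omega>2. x h = x2 h)"
      using P[rule_format, OF f dis] by blast
  qed
qed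

lemma Ksi_prop: "Ksi \<ge> 0 \<and> (\<forall>\<Omega>1 \<Omega>2::int set. finite \<Omega>1 \<longrightarrow> finite \<Omega>2 \<longrightarrow>
          (\<forall>a\<in>\<Omega>1. \<forall>b\<in>\<Omega>2. b - a \<ge> Ksi \<or> a - b \<ge> Ksi) \<longrightarrow>
          (\<forall>x1\<in>X. \<forall>x2\<in>X. \<exists>x\<in>X. (\<forall>h\<in>\<Omega>1. x h = x1 h) \<and> (\<forall>h\<in>\<Omega>2. x h = x2 h)))"
  unfolding Ksi_def by (rule someI_ex[OF Ksi_ex])

lemma Ksi0: "Ksi \<ge> 0" using Ksi_prop by blast

lemma Ksi2:
  assumes "finite \<Omega>1" "finite \<Omega>2" "\<forall>a\<in>\<Omega>1. \<forall>b\<in>\<Omega>2. b - a \<ge> Ksi \<or> a - b \<ge> Ksi" "x1 \<in> X" "x2 \<in> X"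
  shows "\<exists>x\<in>X. (\<forall>h\<in>\<Omega>1. x h = x1 h) \<and> (\<forall>h\<in>\<Omega>2. x h = x2 h)"
  using Ksi_prop[THEN conjunct2, THEN spec, THEN spec, of \<Omega>1 \<Omega>2] assms by blast

lemma spec: "inL X u \<Longrightarrow> inL X v \<Longrightarrow> \<exists>g. length g = nat Ksi \<and> inL X (u @ g @ v)"
proof -
  assume "inL X u" "inL X v"
  then obtain x1 x2' where x1: "x1 \<in> X" "occ x1 0 u" and x2': "x2' \<in> X" "occ x2' 0 v"
    unfolding inL_def by blast
  define c where "c = int (length u) + Ksi"
  define x2 where "x2 = zshift c x2'"
  have x2: "x2 \<in> X" "occ x2 c v" using inv[OF x2'(1)] occ_shift[OF x2'(2), of c] x2_def by auto
  define \<Omega>1 where "\<Omega>1 = {0..<int (length u)}"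
  define \<Omega>2 where "\<Omega>2 = {c..<c + int (length v)}"
  have "\<forall>a\<in>\<Omega>1. \<forall>b\<in>\<Omega>2. b - a \<ge> Ksi \<or> a - b \<ge> Ksi"
    unfolding \<Omega>1_def \<Omega>2_def c_def by auto
  then obtain x where x: "x \<in> X" "\<forall>h\<in>\<Omega>1. x h = x1 h" "\<forall>h\<in>\<Omega>2. x h = x2 h"
    using Ksi2[of \<Omega>1 \<Omega>2 x1 x2] x1(1) x2(1) unfolding \<Omega>1_def \<Omega>2_def by auto
  have ou: "occ x 0 u" using x1(2) x(2) unfolding occ_def \<Omega>1_def by auto
  have ov: "occ x c v" using x2(2) x(3) unfolding occ_def \<Omega>2_def by auto
  define g where "g = map (\<lambda>i. x (int (length u) + int i)) [0..<nat Ksi]"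
  have og: "occ x (int (length u)) g" unfolding occ_def g_def by simp
  have "occ x 0 (u @ g @ v)"
    unfolding occ_append using ou og ov Ksi0 by (simp add: g_def c_def)
  moreover have "length g = nat Ksi" by (simp add: g_def)
  ultimately show ?thesis using x(1) unfolding inL_def by blast
qed

sublocale L: lang X A "nat Ksi"
  by unfold_locales (use inv vals finA ne spec in auto)

lemma dense_per:
  assumes "x \<in> X"
  shows "\<exists>y\<in>X. \<exists>q>0. zshift q y = y \<and> (\<forall>i. \<bar>i\<bar> \<le> int n \<longrightarrow> y i = x i)"
proof -
  define u where "u = map (\<lambda>i. x (- int n + int i)) [0..<2*n+1]"
  have "occ x (- int n) u" unfolding occ_def u_def by (simp del: upt_Suc)
  then have "inL X u" using L.inL_at assms by blast
  then obtain B p s where B: "B = p @ u @ s" "\<And>k. inL X (concat (replicate k B))"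
    using L.periodic_word by blast
  define q where "q = length B"
  have lenu: "length u = 2*n+1" unfolding u_def by (simp del: upt_Suc)
  have q: "q \<ge> length p + 2*n+1" unfolding q_def B(1) using lenu by simp
  have q0: "q > 0" using q by simp
  define y0 where "y0 = (\<lambda>i::int. B ! nat (i mod int q))"
  have setB: "set B \<subseteq> A" using L.inL_set[OF B(2)[of 1]] by simp
  have y0_top: "y0 \<in> topspace (fullshift_top A)"
  proof -
    have "B ! nat (i mod int q) \<in> A" for i
    proof -
      have "nat (i mod int q) < q" using q0 by (simp add: nat_less_iff)
      then show ?thesis using setB q_def nth_mem by blast
    qed
    then show ?thesis unfolding topspace_F y0_def by blast
  qed
  have y0X: "y0 \<in> X"
  proof (rule closed_approx[OF closedX y0_top])
    fix n' :: nat
    define J where "J = int (n'+1) * int q"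
    obtain x' where x': "x' \<in> X" "occ x' 0 (concat (replicate (2*(n'+1)) B))"
      using B(2) unfolding inL_def by blast
    define c where "c = zshift (-J) x'"
    have "c \<in> X" using inv[OF x'(1)] c_def by simp
    moreover have "c i = y0 i" if i: "\<bar>i\<bar> \<le> int n'" for i
    proof -
      have J1: "J \<ge> int n' + 1"
      proof -
        have "(int n' + 1) * 1 \<le> (int n' + 1) * int q"
          by (rule mult_left_mono) (use q0 in auto)
        then show ?thesis unfolding J_def by (simp add: algebra_simps)
      qed
      have ij: "0 \<le> i + J" "i + J < 2 * J" using i J1 by auto
      define t where "t = nat (i + J)"
      have t: "int t = i + J" using ij t_def by simp
      have "t < 2 * (n'+1) * q"
      proof -
        have e: "int (2 * (n'+1) * q) = 2 * J" unfolding J_def by (simp add: algebra_simps)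
        have "int t < int (2 * (n'+1) * q)" unfolding e using t ij(2) by linarith
        then show ?thesis by linarith
      qed
      then have "t < 2*(n'+1) * length B" using q_def by simp
      then have "concat (replicate (2*(n'+1)) B) ! t = B ! (t mod length B)"
        by (rule nth_concat_replicate)
      then have "concat (replicate (2*(n'+1)) B) ! t = B ! (t mod q)" using q_def by simp
      moreover have "c i = concat (replicate (2*(n'+1)) B) ! t"
      proof -
        have "t < length (concat (replicate (2*(n'+1)) B))" using \<open>t < 2 * (n'+1) * q\<close> q_def
          by (simp add: length_concat sum_list_replicate mult.commute mult.left_commute)
        then have "x' (0 + int t) = concat (replicate (2*(n'+1)) B) ! t"
          using x'(2) unfolding occ_def by blast
        then show ?thesis using t unfolding c_def zshift_def by simp
      qed
      moreover have "t mod q = nat (i mod int q)"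
      proof -
        have "int (t mod q) = (i + J) mod int q" using t by (simp add: zmod_int)
        also have "\<dots> = i mod int q" unfolding J_def by simp
        finally show ?thesis by simp
      qed
      ultimately show ?thesis unfolding y0_def by simp
    qed
    ultimately show "\<exists>c\<in>X. \<forall>i. \<bar>i\<bar> \<le> int n' \<longrightarrow> c i = y0 i" by blast
  qed
  define g where "g = - int n - int (length p)"
  define y where "y = zshift g y0"
  have yX: "y \<in> X" using inv[OF y0X] y_def by simp
  have per: "zshift (int q) y = y"
    unfolding y_def y0_def zshift_def
  proof
    fix h show "B ! nat ((h - int q - g) mod int q) = B ! nat ((h - g) mod int q)"
    proof -
      have "(h - int q - g) mod int q = (h - g) mod int q"
        using mod_add_self2[of "h - int q - g" "int q"] by (simp add: algebra_simps)
      then show ?thesis by simp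
    qed
  qed
  have agree: "y i = x i" if i: "\<bar>i\<bar> \<le> int n" for i
  proof -
    define t where "t = nat (i + int n)"
    have t: "int t = i + int n" "t < 2*n+1" using i t_def by auto
    have "y i = y0 (int (length p) + int t)" unfolding y_def zshift_def g_def using t
      by (simp add: algebra_simps)
    also have "\<dots> = B ! (length p + t)"
    proof -
      have "length p + t < q" using q t by simp
      then have "(int (length p) + int t) mod int q = int (length p + t)"
        by (simp add: zmod_int)
      then show ?thesis unfolding y0_def by (simp add: nat_add_distrib)
    qed
    also have "\<dots> = u ! t" using B(1) t lenu by (simp add: nth_append)
    also have "\<dots> = x i" unfolding u_def using t by (simp del: upt_Suc)
    finally show ?thesis .
  qed
  show ?thesis using yX per agree q0 by (intro bexI[of _ y] exI[of _ "int q"]) auto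
qed

end



lemma zshift_zshift: "zshift a (zshift b x) = zshift (a + b) x"
  by (simp add: zshift_def algebra_simps)

lemma per_nat:
  assumes "zshift q x = x"
  shows "x (h + int k * q) = x h"
proof (induction k arbitrary: h)
  case 0 then show ?case by simp
next
  case (Suc k)
  have e: "x (h' - q) = x h'" for h' using assms by (metis zshift_def)
  have "x (h + int (Suc k) * q) = x ((h + q) + int k * q)" by (simp add: algebra_simps)
  also have "\<dots> = x (h + q)" by (rule Suc.IH)
  also have "\<dots> = x h" using e[of "h + q"] by simp
  finally show ?case .
qed

lemma per_mod:
  assumes "zshift q x = x" "q > 0"
  shows "x h = x (h mod q)"
proof -
  have eq: "h mod q = h + (- (h div q)) * q" by (simp add: mod_div_mult_eq[symmetric] algebra_simps)
  have P: "x (h + k * q) = x h" for k :: int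
  proof (cases "k \<ge> 0")
    case True then show ?thesis using per_nat[OF assms(1), of h "nat k"] by simp
  next
    case False
    have "x ((h + k * q) + int (nat (-k)) * q) = x (h + k * q)" by (rule per_nat[OF assms(1)])
    then show ?thesis using False by (simp add: algebra_simps)
  qed
  show ?thesis using P[of "- (h div q)"] eq by simp
qed

context sis
begin

abbreviation "F \<equiv> fullshift_top A"
abbreviation "S \<equiv> subtopology (fullshift_top A) X"

lemma topS: "topspace S = X" using X_top by auto

definition Per :: "int \<Rightarrow> (int \<Rightarrow> 'a) set" where
  "Per q = {x \<in> X. zshift q x = x}"

lemma finite_Per:
  assumes "q > 0" shows "finite (Per q)"
proof -
  define f where "f = (\<lambda>x::int\<Rightarrow>'a. map (\<lambda>i. x (int i)) [0..<nat q])"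
  have "f ` Per q \<subseteq> {w. set w \<subseteq> A \<and> length w = nat q}"
    unfolding f_def Per_def using vals by auto
  then have "finite (f ` Per q)" using finite_lists_length_eq[OF finA] finite_subset by blast
  moreover have "inj_on f (Per q)"
  proof (rule inj_onI)
    fix x y assume xy: "x \<in> Per q" "y \<in> Per q" "f x = f y"
    show "x = y"
    proof
      fix h
      have m: "0 \<le> h mod q" "h mod q < q" using assms by auto
      have "x (h mod q) = f x ! nat (h mod q)" unfolding f_def using m by simp
      also have "\<dots> = y (h mod q)" unfolding xy(3) unfolding f_def using m by simp
      finally show "x h = y h"
        using per_mod[of q x h] per_mod[of q y h] xy(1,2) assms unfolding Per_def by simp
    qed
  qed
  ultimately show ?thesis using finite_imageD by blast
qed

lemma ca_maps: "cellular_automaton A X \<tau> \<Longrightarrow> x \<in> X \<Longrightarrow> \<tau> x \<in> X"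
proof -
  assume "cellular_automaton A X \<tau>" "x \<in> X"
  then have "continuous_map S S \<tau>" unfolding cellular_automaton_def by blast
  then have "\<tau> ` topspace S \<subseteq> topspace S" by (rule continuous_map_image_subset_topspace)
  then show ?thesis using topS \<open>x \<in> X\<close> by blast
qed

lemma ca_Per: "cellular_automaton A X \<tau> \<Longrightarrow> x \<in> Per q \<Longrightarrow> \<tau> x \<in> Per q"
proof -
  assume ca: "cellular_automaton A X \<tau>" and x: "x \<in> Per q"
  then have "x \<in> X" "zshift q x = x" by (auto simp: Per_def)
  then have "zshift q (\<tau> x) = \<tau> x" using ca unfolding cellular_automaton_def by metis
  then show ?thesis using ca_maps[OF ca \<open>x \<in> X\<close>] by (simp add: Per_def)
qed

lemma compactX: "compactin F X"
proof -
  have "compact_space F" unfolding fullshift_top_def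
    by (simp add: compact_space_product_topology compact_space_discrete_topology finA)
  then show ?thesis using closedin_compact_space closedX by blast
qed

lemma HausF: "Hausdorff_space F"
  unfolding fullshift_top_def by (simp add: Hausdorff_space_product_topology)

lemma ca_local:
  assumes "cellular_automaton A X \<tau>" "x \<in> X"
  shows "\<exists>n::nat. \<forall>z\<in>X. (\<forall>i. \<bar>i\<bar> \<le> int n \<longrightarrow> z i = x i) \<longrightarrow> \<tau> z j = \<tau> x j"
proof -
  have cont: "continuous_map S S \<tau>" using assms(1) unfolding cellular_automaton_def by blast
  have "\<tau> x j \<in> A" using vals ca_maps assms by blast
  then have od: "openin (discrete_topology A) {\<tau> x j}" by simp
  have o1: "openin F {w \<in> topspace F. w j \<in> {\<tau> x j}}"
    unfolding fullshift_top_def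
    using openin_continuous_map_preimage[OF continuous_map_product_projection[of j UNIV "\<lambda>_. discrete_topology A"] od] by simp
  then have "openin S (X \<inter> {w \<in> topspace F. w j \<in> {\<tau> x j}})" by (rule openin_subtopology_Int2)
  then have "openin S {z \<in> topspace S. \<tau> z \<in> X \<inter> {w \<in> topspace F. w j \<in> {\<tau> x j}}}"
    by (rule openin_continuous_map_preimage[OF cont])
  then obtain V where V: "openin F V" "{z \<in> topspace S. \<tau> z \<in> X \<inter> {w \<in> topspace F. w j \<in> {\<tau> x j}}} = V \<inter> X"
    unfolding openin_subtopology by blast
  have "x \<in> V" using V(2) assms(2) topS ca_maps[OF assms] X_top by blast
  then obtain n where n: "\<forall>z\<in>topspace F. (\<forall>i. \<bar>i\<bar> \<le> int n \<longrightarrow> z i = x i) \<longrightarrow> z \<in> V"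
    using open_nbhd[OF V(1)] by blast
  show ?thesis
  proof (intro exI ballI impI)
    fix z assume "z \<in> X" "\<forall>i. \<bar>i\<bar> \<le> int n \<longrightarrow> z i = x i"
    then have "z \<in> V \<inter> X" using n X_top by blast
    then show "\<tau> z j = \<tau> x j" using V(2) by blast
  qed
qed

lemma surj: "surjunctive A X"
  unfolding surjunctive_def
proof (intro allI impI)
  fix \<tau> assume ca: "cellular_automaton A X \<tau>" and inj: "inj_on \<tau> X"
  have sub: "\<tau> ` X \<subseteq> X" using ca_maps[OF ca] by blast
  have cont: "continuous_map S S \<tau>" using ca unfolding cellular_automaton_def by blast
  have "compactin S X" using compactX by (simp add: compactin_subtopology)
  then have "compactin S (\<tau> ` X)" using image_compactin cont by blast
  then have "compactin F (\<tau> ` X)" by (simp add: compactin_subtopology)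
  then have cl: "closedin F (\<tau> ` X)" using compactin_imp_closedin HausF by blast
  have perim: "y \<in> \<tau> ` X" if "y \<in> Per q" "q > 0" for y q
  proof -
    have "\<tau> ` Per q = Per q"
    proof (rule endo_inj_surj[OF finite_Per[OF that(2)]])
      show "\<tau> ` Per q \<subseteq> Per q" using ca_Per[OF ca] by blast
      show "inj_on \<tau> (Per q)" using inj by (rule inj_on_subset) (auto simp: Per_def)
    qed
    then show ?thesis using that(1) by (auto simp: Per_def)
  qed
  have "X \<subseteq> \<tau> ` X"
  proof
    fix x assume x: "x \<in> X"
    show "x \<in> \<tau> ` X"
    proof (rule closed_approx[OF cl])
      show "x \<in> topspace F" using x X_top by blast
      fix n :: nat
      obtain y q where y: "y \<in> X" "q > 0" "zshift q y = y" "\<forall>i. \<bar>i\<bar> \<le> int n \<longrightarrow> y i = x i"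
        using dense_per[OF x, of n] by blast
      then have "y \<in> \<tau> ` X" using perim[of y q] by (auto simp: Per_def)
      then show "\<exists>c\<in>\<tau> ` X. \<forall>i. \<bar>i\<bar> \<le> int n \<longrightarrow> c i = x i" using y(4) by blast
    qed
  qed
  then show "\<tau> ` X = X" using sub by blast
qed

end



context sis
begin

abbreviation "G \<equiv> Aut A X"

lemma G_carrier: "carrier G = {\<tau>. cellular_automaton A X \<tau> \<and> bij_betw \<tau> X X}"
  by (simp add: Aut_def)
lemma G_mult: "\<sigma> \<otimes>\<^bsub>G\<^esub> \<tau> = (\<lambda>x\<in>X. \<sigma> (\<tau> x))"
  by (simp add: Aut_def)
lemma G_one: "\<one>\<^bsub>G\<^esub> = (\<lambda>x\<in>X. x)"
  by (simp add: Aut_def)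

lemma ca_ext: "cellular_automaton A X \<sigma> \<Longrightarrow> \<sigma> \<in> extensional X"
  unfolding cellular_automaton_def by blast
lemma ca_cont: "cellular_automaton A X \<sigma> \<Longrightarrow> continuous_map S S \<sigma>"
  unfolding cellular_automaton_def by blast
lemma ca_eqv: "cellular_automaton A X \<sigma> \<Longrightarrow> x \<in> X \<Longrightarrow> \<sigma> (zshift g x) = zshift g (\<sigma> x)"
  unfolding cellular_automaton_def by blast

lemma ca_comp:
  assumes "cellular_automaton A X \<sigma>" "cellular_automaton A X \<tau>"
  shows "cellular_automaton A X (\<lambda>x\<in>X. \<sigma> (\<tau> x))"
  unfolding cellular_automaton_def
proof (intro conjI allI ballI)
  show "(\<lambda>x\<in>X. \<sigma> (\<tau> x)) \<in> extensional X" by simp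
  have "continuous_map S S (\<sigma> \<circ> \<tau>)"
    using continuous_map_compose[OF ca_cont[OF assms(2)] ca_cont[OF assms(1)]] .
  then show "continuous_map S S (\<lambda>x\<in>X. \<sigma> (\<tau> x))"
    by (rule continuous_map_eq) (simp add: topS)
  fix g x assume x: "x \<in> X"
  have "zshift g x \<in> X" using inv x by blast
  then show "(\<lambda>x\<in>X. \<sigma> (\<tau> x)) (zshift g x) = zshift g ((\<lambda>x\<in>X. \<sigma> (\<tau> x)) x)"
    using x ca_eqv[OF assms(1)] ca_eqv[OF assms(2)] ca_maps[OF assms(2)] by simp
qed

lemma ca_id: "cellular_automaton A X (\<lambda>x\<in>X. x)"
  unfolding cellular_automaton_def
proof (intro conjI allI ballI)
  show "(\<lambda>x\<in>X. x) \<in> extensional X" by simp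
  show "continuous_map S S (\<lambda>x\<in>X. x)"
    by (rule continuous_map_eq[OF continuous_map_id]) (simp add: topS)
  fix g x assume x: "x \<in> X"
  then show "(\<lambda>x\<in>X. x) (zshift g x) = zshift g ((\<lambda>x\<in>X. x) x)" using inv by simp
qed

lemma ca_inv:
  assumes ca: "cellular_automaton A X \<sigma>" and b: "bij_betw \<sigma> X X"
  shows "cellular_automaton A X (\<lambda>x\<in>X. inv_into X \<sigma> x)"
  unfolding cellular_automaton_def
proof (intro conjI allI ballI)
  show "(\<lambda>x\<in>X. inv_into X \<sigma> x) \<in> extensional X" by simp
  have inj: "inj_on \<sigma> X" and im: "\<sigma> ` X = X" using b by (auto simp: bij_betw_def)
  have "homeomorphic_map S S \<sigma>"
    by (rule continuous_imp_homeomorphic_map[OF ca_cont[OF ca]])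
       (use compact_space_subtopology[OF compactX] Hausdorff_space_subtopology[OF HausF] inj im topS in auto)
  then obtain g where g: "homeomorphic_maps S S \<sigma> g" using homeomorphic_map_maps by blast
  then have gc: "continuous_map S S g" and gi: "\<And>y. y \<in> X \<Longrightarrow> \<sigma> (g y) = y"
    unfolding homeomorphic_maps_def using topS by auto
  have gX: "g y \<in> X" if "y \<in> X" for y
    using continuous_map_image_subset_topspace[OF gc] that topS by blast
  show "continuous_map S S (\<lambda>x\<in>X. inv_into X \<sigma> x)"
  proof (rule continuous_map_eq[OF gc])
    fix y assume "y \<in> topspace S"
    then have y: "y \<in> X" using topS by simp
    show "g y = (\<lambda>x\<in>X. inv_into X \<sigma> x) y"
      using inv_into_f_eq[of \<sigma> X "g y" y] inj gX[OF y] gi[OF y] y by simp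
  qed
  fix h x assume x: "x \<in> X"
  define y where "y = inv_into X \<sigma> x"
  have y: "y \<in> X" "\<sigma> y = x" using x im inv_into_into[of x \<sigma> X] f_inv_into_f[of x \<sigma> X] y_def by auto
  have zx: "zshift h x \<in> X" "zshift h y \<in> X" using inv x y by auto
  have "\<sigma> (zshift h y) = zshift h x" using ca_eqv[OF ca y(1)] y(2) by simp
  then have "inv_into X \<sigma> (zshift h x) = zshift h y"
    using inv_into_f_eq[OF inj zx(2)] by simp
  then show "(\<lambda>x\<in>X. inv_into X \<sigma> x) (zshift h x) = zshift h ((\<lambda>x\<in>X. inv_into X \<sigma> x) x)"
    using zx x y_def by simp
qed

lemma bij_restrict: "bij_betw f X X \<Longrightarrow> (\<And>x. x \<in> X \<Longrightarrow> g x = f x) \<Longrightarrow> bij_betw g X X"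
  using bij_betw_cong by blast

lemma carrier_maps: "\<sigma> \<in> carrier G \<Longrightarrow> x \<in> X \<Longrightarrow> \<sigma> x \<in> X"
  using G_carrier ca_maps by blast

lemma group_G: "group G"
proof (rule groupI)
  fix x y assume x: "x \<in> carrier G" and y: "y \<in> carrier G"
  show "x \<otimes>\<^bsub>G\<^esub> y \<in> carrier G"
  proof -
    have "bij_betw (x \<circ> y) X X" using x y G_carrier bij_betw_trans by blast
    then have "bij_betw (\<lambda>z\<in>X. x (y z)) X X" by (rule bij_restrict) simp
    then show ?thesis using x y ca_comp by (simp add: G_carrier G_mult)
  qed
next
  show "\<one>\<^bsub>G\<^esub> \<in> carrier G" using ca_id by (simp add: G_carrier G_one bij_betw_def inj_on_def)
next
  fix x y z assume x: "x \<in> carrier G" and y: "y \<in> carrier G" and z: "z \<in> carrier G"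
  show "x \<otimes>\<^bsub>G\<^esub> y \<otimes>\<^bsub>G\<^esub> z = x \<otimes>\<^bsub>G\<^esub> (y \<otimes>\<^bsub>G\<^esub> z)"
    unfolding G_mult using carrier_maps[OF z] by (auto simp: restrict_def)
next
  fix x assume x: "x \<in> carrier G"
  show "\<one>\<^bsub>G\<^esub> \<otimes>\<^bsub>G\<^esub> x = x"
  proof
    fix z show "(\<one>\<^bsub>G\<^esub> \<otimes>\<^bsub>G\<^esub> x) z = x z"
      using carrier_maps[OF x] ca_ext[of x] x G_carrier unfolding G_mult G_one
      by (cases "z \<in> X") (auto simp: extensional_def)
  qed
next
  fix x assume x: "x \<in> carrier G"
  then have ca: "cellular_automaton A X x" and b: "bij_betw x X X" by (auto simp: G_carrier)
  define y where "y = (\<lambda>z\<in>X. inv_into X x z)"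
  have "y \<in> carrier G"
  proof -
    have "bij_betw (inv_into X x) X X" using b bij_betw_inv_into by blast
    then have "bij_betw y X X" unfolding y_def by (rule bij_restrict) simp
    then show ?thesis using ca_inv[OF ca b] y_def by (simp add: G_carrier)
  qed
  moreover have "y \<otimes>\<^bsub>G\<^esub> x = \<one>\<^bsub>G\<^esub>"
    unfolding G_mult G_one y_def
  proof (rule restrict_ext)
    fix z assume "z \<in> X"
    then show "(\<lambda>z\<in>X. inv_into X x z) (x z) = z"
      using carrier_maps[OF \<open>x \<in> carrier G\<close>] b by (simp add: bij_betw_def)
  qed
  ultimately show "\<exists>y\<in>carrier G. y \<otimes>\<^bsub>G\<^esub> x = \<one>\<^bsub>G\<^esub>" by blast
qed

lemma G_eval: "z \<in> X \<Longrightarrow> (\<sigma> \<otimes>\<^bsub>G\<^esub> \<tau>) z = \<sigma> (\<tau> z)"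
  by (simp add: G_mult)
lemma G_one_eval: "z \<in> X \<Longrightarrow> \<one>\<^bsub>G\<^esub> z = z"
  by (simp add: G_one)

lemma inv_eval: "a \<in> carrier G \<Longrightarrow> z \<in> X \<Longrightarrow> (inv\<^bsub>G\<^esub> a) (a z) = z"
  using group.l_inv[OF group_G, of a] G_eval G_one_eval by metis

lemma inv_eval2: "a \<in> carrier G \<Longrightarrow> z \<in> X \<Longrightarrow> a ((inv\<^bsub>G\<^esub> a) z) = z"
  using group.r_inv[OF group_G, of a] G_eval G_one_eval by metis

lemma carrier_Per: "\<sigma> \<in> carrier G \<Longrightarrow> z \<in> Per q \<Longrightarrow> \<sigma> z \<in> Per q"
  using ca_Per G_carrier by blast

lemma resfin: "residually_finite G"
  unfolding residually_finite_def
proof (intro ballI impI)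
  interpret grp: group G by (rule group_G)
  fix \<sigma> assume \<sigma>: "\<sigma> \<in> carrier G" and ne1: "\<sigma> \<noteq> \<one>\<^bsub>G\<^esub>"
  have ca: "cellular_automaton A X \<sigma>" using \<sigma> G_carrier by blast
  obtain x where x: "x \<in> X" "\<sigma> x \<noteq> x"
  proof (rule ccontr)
    assume "\<not> thesis"
    then have "\<forall>x\<in>X. \<sigma> x = x" using that by blast
    then have "\<sigma> = \<one>\<^bsub>G\<^esub>" unfolding G_one using ca_ext[OF ca]
      by (intro ext) (auto simp: extensional_def)
    then show False using ne1 by simp
  qed
  then obtain j where j: "\<sigma> x j \<noteq> x j" by blast
  obtain n1 where n1: "\<forall>z\<in>X. (\<forall>i. \<bar>i\<bar> \<le> int n1 \<longrightarrow> z i = x i) \<longrightarrow> \<sigma> z j = \<sigma> x j"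
    using ca_local[OF ca x(1)] by blast
  obtain y q where y: "y \<in> X" "q > 0" "zshift q y = y" "\<forall>i. \<bar>i\<bar> \<le> int (max n1 (nat \<bar>j\<bar>)) \<longrightarrow> y i = x i"
    using dense_per[OF x(1), of "max n1 (nat \<bar>j\<bar>)"] by blast
  have "\<sigma> y j = \<sigma> x j" using n1 y(1,4) by auto
  moreover have "y j = x j" using y(4) by auto
  ultimately have moved: "\<sigma> y \<noteq> y" using j by metis
  have yP: "y \<in> Per q" using y by (simp add: Per_def)
  define H where "H = {\<tau> \<in> carrier G. \<forall>z\<in>Per q. \<tau> z = z}"
  have PX: "Per q \<subseteq> X" by (auto simp: Per_def)
  have subH: "subgroup H G"
  proof (rule grp.subgroupI)
    show "H \<subseteq> carrier G" unfolding H_def by blast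
    have "\<one>\<^bsub>G\<^esub> \<in> H" unfolding H_def using PX G_one_eval by auto
    then show "H \<noteq> {}" by blast
  next
    fix a assume a: "a \<in> H"
    then have ac: "a \<in> carrier G" unfolding H_def by blast
    have "(inv\<^bsub>G\<^esub> a) z = z" if "z \<in> Per q" for z
      using inv_eval[OF ac, of z] a that PX unfolding H_def by auto
    then show "inv\<^bsub>G\<^esub> a \<in> H" unfolding H_def using ac by auto
  next
    fix a b assume a: "a \<in> H" and b: "b \<in> H"
    then show "a \<otimes>\<^bsub>G\<^esub> b \<in> H" unfolding H_def using PX G_eval by auto
  qed
  define r where "r = (\<lambda>\<tau>::(int\<Rightarrow>'a)\<Rightarrow>(int\<Rightarrow>'a). restrict \<tau> (Per q))"
  have same: "H #>\<^bsub>G\<^esub> a = H #>\<^bsub>G\<^esub> b" if ab: "a \<in> carrier G" "b \<in> carrier G" "r a = r b" for a b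
  proof -
    have agr: "a z = b z" if "z \<in> Per q" for z using ab(3) that unfolding r_def by (metis restrict_apply')
    define h where "h = b \<otimes>\<^bsub>G\<^esub> inv\<^bsub>G\<^esub> a"
    have hc: "h \<in> carrier G" unfolding h_def using ab by simp
    have "h z = z" if z: "z \<in> Per q" for z
    proof -
      have w: "(inv\<^bsub>G\<^esub> a) z \<in> Per q" using carrier_Per[OF grp.inv_closed[OF ab(1)] z] .
      have "h z = b ((inv\<^bsub>G\<^esub> a) z)" unfolding h_def using G_eval z PX by auto
      also have "\<dots> = a ((inv\<^bsub>G\<^esub> a) z)" using agr[OF w] by simp
      also have "\<dots> = z" using inv_eval2[OF ab(1)] z PX by auto
      finally show ?thesis .
    qed
    then have hH: "h \<in> H" unfolding H_def using hc by blast
    have "h \<otimes>\<^bsub>G\<^esub> a = b" unfolding h_def using ab by (simp add: grp.m_assoc)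
    then have "b \<in> H #>\<^bsub>G\<^esub> a" unfolding r_coset_def using hH by blast
    then show ?thesis using grp.repr_independence[OF _ ab(1) subH] by blast
  qed
  define \<Phi> where "\<Phi> = (\<lambda>f. H #>\<^bsub>G\<^esub> (SOME a. a \<in> carrier G \<and> r a = f))"
  have "rcosets\<^bsub>G\<^esub> H \<subseteq> \<Phi> ` (r ` carrier G)"
  proof
    fix C assume "C \<in> rcosets\<^bsub>G\<^esub> H"
    then obtain a where a: "a \<in> carrier G" "C = H #>\<^bsub>G\<^esub> a" unfolding RCOSETS_def by blast
    define a' where "a' = (SOME a'. a' \<in> carrier G \<and> r a' = r a)"
    have a': "a' \<in> carrier G \<and> r a' = r a" unfolding a'_def by (rule someI[of _ a]) (use a in blast)
    have "C = \<Phi> (r a)" unfolding \<Phi>_def a'_def[symmetric] using same[of a a'] a a' by simp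
    then show "C \<in> \<Phi> ` (r ` carrier G)" using a by blast
  qed
  moreover have "r ` carrier G \<subseteq> Pi\<^sub>E (Per q) (\<lambda>_. Per q)"
    unfolding r_def using carrier_Per by auto
  then have "finite (r ` carrier G)"
    using finite_PiE[of "Per q" "\<lambda>_. Per q"] finite_Per[OF y(2)] finite_subset by blast
  ultimately have "finite (rcosets\<^bsub>G\<^esub> H)" using finite_subset by blast
  moreover have "\<sigma> \<notin> H" unfolding H_def using yP moved by blast
  ultimately show "\<exists>H. subgroup H G \<and> finite (rcosets\<^bsub>G\<^esub> H) \<and> \<sigma> \<notin> H" using subH by blast
qed

end



lemma per_mult: assumes "zshift q x = x" shows "zshift (int m * q) x = x"
proof (rule ext)
  fix h
  from per_nat[OF assms, of "h - int m * q" m] show "zshift (int m * q) x h = x h"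
    by (simp add: zshift_def)
qed

context sis
begin

lemma zshift_inj: "inj (zshift g :: (int \<Rightarrow> 'a) \<Rightarrow> (int \<Rightarrow> 'a))"
proof (rule inj_onI)
  fix x y :: "int \<Rightarrow> 'a" assume "x \<in> UNIV" "y \<in> UNIV" and e: "zshift g x = zshift g y"
  show "x = y"
  proof (rule ext)
    fix h
    have "zshift g x (h + g) = zshift g y (h + g)" using e by simp
    then show "x h = y h" by (simp add: zshift_def)
  qed
qed

lemma Per_shift: "zshift g ` Per q = Per q"
proof
  show "zshift g ` Per q \<subseteq> Per q"
  proof
    fix y assume "y \<in> zshift g ` Per q"
    then obtain x where x: "x \<in> X" "zshift q x = x" "y = zshift g x" by (auto simp: Per_def)
    have "zshift q y = zshift g (zshift q x)" unfolding x(3) zshift_zshift by (simp add: add.commute)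
    then show "y \<in> Per q" using x inv by (simp add: Per_def)
  qed
  show "Per q \<subseteq> zshift g ` Per q"
  proof
    fix x assume x: "x \<in> Per q"
    have "zshift (-g) x \<in> Per q"
    proof -
      have x': "x \<in> X" "zshift q x = x" using x by (auto simp: Per_def)
      have "zshift q (zshift (-g) x) = zshift (-g) (zshift q x)" unfolding zshift_zshift by (simp add: add.commute)
      then show ?thesis using x' inv by (simp add: Per_def)
    qed
    moreover have "zshift g (zshift (-g) x) = x" by (simp add: zshift_def)
    ultimately show "x \<in> zshift g ` Per q" by (metis image_eqI)
  qed
qed

lemma cont_shift: "continuous_map S S (zshift g)"
proof -
  have "continuous_map F F (zshift g)"
    unfolding fullshift_top_def continuous_map_componentwise_UNIV zshift_def
    by (auto intro: continuous_map_product_projection)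
  then have "continuous_map S F (zshift g)" by (rule continuous_map_from_subtopology)
  then show ?thesis by (rule continuous_map_into_subtopology) (use inv topS in auto)
qed

definition Bor where "Bor = borel_sets_of A X"

lemma opens_sub: "{U. openin S U} \<subseteq> Pow X"
proof
  fix U assume "U \<in> {U. openin S U}"
  then have "U \<subseteq> topspace S" using openin_subset by blast
  then show "U \<in> Pow X" using topS by simp
qed

lemma sa: "sigma_algebra X Bor"
  unfolding Bor_def borel_sets_of_def by (rule sigma_algebra_sigma_sets[OF opens_sub])

lemma pre_Bor: "T \<in> Bor \<Longrightarrow> zshift g -` T \<inter> X \<in> Bor"
  unfolding Bor_def borel_sets_of_def
proof (induction rule: sigma_sets.induct)
  case (Basic a)
  then have "openin S a" by simp
  then have "openin S {x \<in> topspace S. zshift g x \<in> a}"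
    by (rule openin_continuous_map_preimage[OF cont_shift])
  moreover have "{x \<in> topspace S. zshift g x \<in> a} = zshift g -` a \<inter> X" using topS by auto
  ultimately show ?case by auto
next
  case Empty then show ?case by (simp add: sigma_sets.Empty)
next
  case (Compl a)
  have "zshift g -` (X - a) \<inter> X = X - (zshift g -` a \<inter> X)" using inv by auto
  then show ?case using sigma_sets.Compl[OF Compl.IH] by simp
next
  case (Union a)
  have "zshift g -` (\<Union>i. a i) \<inter> X = (\<Union>i. zshift g -` a i \<inter> X)" by auto
  then show ?case using sigma_sets.Union[OF Union.IH] by simp
qed

lemma measure_part:
  "\<exists>M. prob_space M \<and> space M = X \<and> sets M = borel_sets_of A X \<and>
              (\<forall>g. \<forall>S\<in>sets M. measure M ((zshift g -` S) \<inter> X) = measure M S) \<and>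
              (\<forall>U. openin (subtopology (fullshift_top A) X) U \<longrightarrow> U \<noteq> {} \<longrightarrow> measure M U > 0)"
proof -
  obtain x0 where x0: "x0 \<in> X" using ne by blast
  obtain p0 q0 where p0: "p0 \<in> X" "q0 > 0" "zshift q0 p0 = p0"
    using dense_per[OF x0, of 0] by blast
  define Q where "Q = (\<lambda>k::nat. Per (int (k+1) * q0))"
  have Qf: "finite (Q k)" for k unfolding Q_def using p0(2) by (intro finite_Per) simp
  have Qne: "Q k \<noteq> {}" for k
  proof -
    have "p0 \<in> Q k" unfolding Q_def Per_def using p0(1) per_mult[OF p0(3), of "k+1"] by simp
    then show ?thesis by blast
  qed
  have QX: "Q k \<subseteq> X" for k unfolding Q_def Per_def by blast
  define p where "p = bind_pmf (geometric_pmf (1/2)) (\<lambda>k. pmf_of_set (Q k))"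
  have setp: "set_pmf p = (\<Union>k. Q k)"
    unfolding p_def using Qf Qne by (simp add: set_pmf_geometric)
  have setpX: "set_pmf p \<subseteq> X" using setp QX by blast
  have mapp: "map_pmf (zshift g) p = p" for g
  proof -
    have "map_pmf (zshift g) (pmf_of_set (Q k)) = pmf_of_set (Q k)" for k
      using map_pmf_of_set_inj[OF inj_on_subset[OF zshift_inj subset_UNIV] Qne Qf] Per_shift
      unfolding Q_def by simp
    then show ?thesis unfolding p_def map_bind_pmf by simp
  qed
  define M where "M = measure_of X Bor (emeasure (measure_pmf p))"
  have sM: "sets M = Bor" unfolding M_def using sa by (simp add: sigma_algebra.sets_measure_of_eq)
  have spM: "space M = X" unfolding M_def using sa by (simp add: sigma_algebra.space_measure_of_eq)
  have ca: "countably_additive Bor (emeasure (measure_pmf p))"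
    using emeasure_countably_additive[of "measure_pmf p"] unfolding countably_additive_def by simp
  have eM: "emeasure M T = emeasure (measure_pmf p) T" if "T \<in> Bor" for T
    unfolding M_def by (rule emeasure_measure_of_sigma[OF sa _ ca that]) (simp add: positive_def)
  have mM: "measure M T = measure (measure_pmf p) T" if "T \<in> Bor" for T
    using eM[OF that] by (simp add: measure_def)
  have XB: "X \<in> Bor"
  proof -
    have "openin S X" using openin_topspace[of S] topS by simp
    then show ?thesis unfolding Bor_def borel_sets_of_def by blast
  qed
  have pX: "emeasure (measure_pmf p) X = 1"
  proof -
    have "emeasure (measure_pmf p) X = emeasure (measure_pmf p) (X \<inter> set_pmf p)"
      by (simp add: emeasure_Int_set_pmf)
    also have "X \<inter> set_pmf p = UNIV \<inter> set_pmf p" using setpX by blast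
    also have "emeasure (measure_pmf p) (UNIV \<inter> set_pmf p) = emeasure (measure_pmf p) UNIV"
      by (rule emeasure_Int_set_pmf)
    also have "emeasure (measure_pmf p) UNIV = 1"
      using measure_pmf.emeasure_space_1[of p] by simp
    finally show ?thesis .
  qed
  have prob: "prob_space M" by (rule prob_spaceI) (simp add: spM eM[OF XB] pX)
  have invar: "measure M ((zshift g -` T) \<inter> X) = measure M T" if T: "T \<in> sets M" for g T
  proof -
    have TB: "T \<in> Bor" using T sM by simp
    have "measure M ((zshift g -` T) \<inter> X) = measure (measure_pmf p) ((zshift g -` T) \<inter> X)"
      using mM[OF pre_Bor[OF TB]] .
    also have "\<dots> = measure (measure_pmf p) (((zshift g -` T) \<inter> X) \<inter> set_pmf p)"
      by (simp add: measure_Int_set_pmf)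
    also have "((zshift g -` T) \<inter> X) \<inter> set_pmf p = (zshift g -` T) \<inter> set_pmf p" using setpX by blast
    also have "measure (measure_pmf p) \<dots> = measure (measure_pmf p) (zshift g -` T)"
      by (simp add: measure_Int_set_pmf)
    also have "\<dots> = measure (measure_pmf (map_pmf (zshift g) p)) T" by simp
    also have "\<dots> = measure M T" using mapp mM[OF TB] by simp
    finally show ?thesis .
  qed
  have full: "measure M U > 0" if U: "openin S U" "U \<noteq> {}" for U
  proof -
    obtain x where x: "x \<in> U" using U(2) by blast
    obtain V where V: "openin F V" "U = V \<inter> X" using U(1) unfolding openin_subtopology by (elim exE conjE) (rule that)
    have xX: "x \<in> X" "x \<in> V" using x V(2) by auto
    obtain n where n: "\<forall>z\<in>topspace F. (\<forall>i. \<bar>i\<bar> \<le> int n \<longrightarrow> z i = x i) \<longrightarrow> z \<in> V"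
      using open_nbhd[OF V(1) xX(2)] by blast
    obtain y q where y: "y \<in> X" "q > 0" "zshift q y = y" "\<forall>i. \<bar>i\<bar> \<le> int n \<longrightarrow> y i = x i"
      using dense_per[OF xX(1), of n] by blast
    have "y \<in> topspace F" using y(1) X_top by blast
    then have "y \<in> V" using n y(4) by blast
    then have yU: "y \<in> U" using V(2) y(1) by blast
    have "y \<in> Q (nat q - 1)"
    proof -
      have "int (nat q - 1 + 1) = q" using y(2) by simp
      then have "zshift (int (nat q - 1 + 1) * q0) y = y"
        using per_mult[OF y(3), of "nat q0"] p0(2) by (simp add: mult.commute)
      then show ?thesis unfolding Q_def Per_def using y(1) by blast
    qed
    then have "y \<in> set_pmf p" using setp by blast
    then have "measure (measure_pmf p) U > 0" using yU by (rule measure_pmf_posI)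
    moreover have "U \<in> Bor" unfolding Bor_def borel_sets_of_def using U(1) by blast
    ultimately show ?thesis using mM by simp
  qed
  have sM': "sets M = borel_sets_of A X" using sM Bor_def by simp
  show ?thesis
    apply (rule exI[of _ M])
    apply (intro conjI prob spM sM' allI ballI impI)
     apply (rule invar, assumption)
    apply (rule full, assumption+)
    done
qed

end

theorem corollary1p4:
  fixes A :: "'a set" and X :: "(int \<Rightarrow> 'a) set"
  assumes "finite A"
    and "subshift A X"
    and "X \<noteq> {}"
    and "strongly_irreducible X"
  shows "surjunctive A X \<and> residually_finite (Aut A X) \<and>
         (\<exists>M. prob_space M \<and> space M = X \<and> sets M = borel_sets_of A X \<and>
              (\<forall>g. \<forall>S\<in>sets M. measure M ((zshift g -` S) \<inter> X) = measure M S) \<and>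
              (\<forall>U. openin (subtopology (fullshift_top A) X) U \<longrightarrow> U \<noteq> {} \<longrightarrow> measure M U > 0))"
proof -
  interpret sis A X using assms by unfold_locales
  show ?thesis using surj resfin measure_part by blast
qed

end
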